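(* Let $M$ be a finitary matroid on $E$, $B$ a base of $M$, $n\ge 0$ an integer, $e_0,\dots,e_n\in E\setminus B$ pairwise distinct, and $F\subseteq B$ with $|F|\le n$. Then there exist $i^*\le n$ and a circuit $C$ of $M$ with \[e_{i^*}\in C\subseteq\bigcup_{i^*\le i\le n}C_M(e_i,B)\setminus F.\]
   Context: $C_M(e,B)$ denotes the fundamental circuit of $e\notin B$ on the base $B$, i.e. the unique circuit of $M$ contained in $B\cup\{e\}$. *)

theory Defs
  imports Main
begin

text \<open>A (possibly infinite) matroid on ground set E, given by its independent sets,
  following the independence axioms of Bruhn, Diestel, Kriesell, Pendavingh, Wollan.\<close>

definition maximal_indep :: "'a set \<Rightarrow> ('a set \<Rightarrow> bool) \<Rightarrow> 'a set \<Rightarrow> 'a set \<Rightarrow> bool" where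
  "maximal_indep E indep X I \<longleftrightarrow> indep I \<and> I \<subseteq> X \<and>
     (\<forall>J. indep J \<and> I \<subseteq> J \<and> J \<subseteq> X \<longrightarrow> J = I)"

definition matroid :: "'a set \<Rightarrow> ('a set \<Rightarrow> bool) \<Rightarrow> bool" where
  "matroid E indep \<longleftrightarrow>
     (\<forall>I. indep I \<longrightarrow> I \<subseteq> E) \<and>
     indep {} \<and>
     (\<forall>I J. indep J \<and> I \<subseteq> J \<longrightarrow> indep I) \<and>
     (\<forall>I J. indep I \<and> \<not> maximal_indep E indep E I \<and> maximal_indep E indep E J
        \<longrightarrow> (\<exists>x\<in>J - I. indep (insert x I))) \<and>
     (\<forall>I X. indep I \<and> I \<subseteq> X \<and> X \<subseteq> E \<longrightarrow>
        (\<exists>J. I \<subseteq> J \<and> maximal_indep E indep X J))"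

definition base :: "'a set \<Rightarrow> ('a set \<Rightarrow> bool) \<Rightarrow> 'a set \<Rightarrow> bool" where
  "base E indep B \<longleftrightarrow> maximal_indep E indep E B"

definition circuit :: "'a set \<Rightarrow> ('a set \<Rightarrow> bool) \<Rightarrow> 'a set \<Rightarrow> bool" where
  "circuit E indep C \<longleftrightarrow> C \<subseteq> E \<and> \<not> indep C \<and> (\<forall>x\<in>C. indep (C - {x}))"

definition finitary_matroid :: "'a set \<Rightarrow> ('a set \<Rightarrow> bool) \<Rightarrow> bool" where
  "finitary_matroid E indep \<longleftrightarrow> matroid E indep \<and> (\<forall>C. circuit E indep C \<longrightarrow> finite C)"

definition fund_circuit :: "'a set \<Rightarrow> ('a set \<Rightarrow> bool) \<Rightarrow> 'a \<Rightarrow> 'a set \<Rightarrow> 'a set" where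
  "fund_circuit E indep e B = (THE C. circuit E indep C \<and> C \<subseteq> insert e B)"

end

theory Submission
  imports Defs
begin

lemma m_sub: "matroid E indep \<Longrightarrow> indep I \<Longrightarrow> I \<subseteq> E"
  unfolding matroid_def by (elim conjE) (erule allE, erule impE, assumption)
lemma m_down: "matroid E indep \<Longrightarrow> indep J \<Longrightarrow> I \<subseteq> J \<Longrightarrow> indep I"
  unfolding matroid_def by (elim conjE) (metis)
lemma m_aug: "matroid E indep \<Longrightarrow> indep I \<Longrightarrow> \<not> base E indep I \<Longrightarrow> base E indep J
   \<Longrightarrow> \<exists>x\<in>J - I. indep (insert x I)"
  unfolding matroid_def base_def by (elim conjE) (metis)
lemma m_max: "matroid E indep \<Longrightarrow> indep I \<Longrightarrow> I \<subseteq> X \<Longrightarrow> X \<subseteq> E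
   \<Longrightarrow> \<exists>J. I \<subseteq> J \<and> maximal_indep E indep X J"
  unfolding matroid_def by (elim conjE) (metis)

lemma base_D: "base E indep B \<Longrightarrow> indep B"
  "base E indep B \<Longrightarrow> B \<subseteq> E"
  "base E indep B \<Longrightarrow> indep J \<Longrightarrow> B \<subseteq> J \<Longrightarrow> J \<subseteq> E \<Longrightarrow> J = B"
  unfolding base_def maximal_indep_def by blast+

lemma lemM:
  assumes m: "matroid E indep" and bB: "base E indep B" and "B \<subseteq> X" "X \<subseteq> E"
    and K: "maximal_indep E indep X K"
  shows "base E indep K"
proof (rule ccontr)
  assume nb: "\<not> base E indep K"
  have iK: "indep K" "K \<subseteq> X" using K unfolding maximal_indep_def by auto
  obtain x where x: "x \<in> B - K" "indep (insert x K)" using m_aug[OF m iK(1) nb bB] by blast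
  have "insert x K \<subseteq> X" using x iK assms(3) by auto
  then have "insert x K = K" using K x unfolding maximal_indep_def by blast
  then show False using x by auto
qed

lemma lemL:
  assumes m: "matroid E indep" and bB: "base E indep B" and bK: "base E indep K"
    and b: "b \<in> B" "b \<notin> K"
    and H: "\<forall>x\<in>K - B. \<not> indep (insert x (B - {b}))"
  shows False
proof -
  have i: "indep (B - {b})" using m_down[OF m base_D(1)[OF bB]] by blast
  have nb: "\<not> base E indep (B - {b})"
  proof
    assume "base E indep (B - {b})"
    then have "B = B - {b}" using base_D(3)[of E indep "B - {b}" B] base_D[OF bB] by blast
    then show False using b by auto
  qed
  obtain x where x: "x \<in> K - (B - {b})" "indep (insert x (B - {b}))"
    using m_aug[OF m i nb bK] by blast
  have "x \<in> K - B" using x b by auto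
  then show False using H x by blast
qed

lemma exch:
  assumes m: "matroid E indep" and bB: "base E indep B"
  shows "base E indep K \<Longrightarrow> finite (K - B) \<Longrightarrow> finite (B - K) \<and> card (B - K) = card (K - B)"
proof (induction "card (K - B)" arbitrary: K)
  case 0
  then have "K \<subseteq> B" by auto
  then have "B = K" using base_D(3)[OF 0(2) base_D(1)[OF bB]] base_D(2)[OF bB] by blast
  thus ?case by simp
next
  case (Suc k K)
  obtain y where y: "y \<in> K - B"
    using Suc.hyps(2) by (metis all_not_in_conv card.empty nat.distinct(1))
  have iK: "indep K" "K \<subseteq> E" using base_D[OF Suc.prems(1)] by auto
  have ik: "indep (K - {y})" using m_down[OF m iK(1)] by blast
  have nb: "\<not> base E indep (K - {y})"
  proof
    assume "base E indep (K - {y})"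
    then have "K = K - {y}" using base_D(3)[of E indep "K - {y}" K] iK by blast
    then show False using y by auto
  qed
  obtain x where x: "x \<in> B - (K - {y})" "indep (insert x (K - {y}))"
    using m_aug[OF m ik nb bB] by blast
  have xy: "x \<noteq> y" using x y by auto
  have xK: "x \<notin> K" using x xy by auto
  define K' where "K' = insert x (K - {y})"
  have bK': "base E indep K'"
  proof (rule ccontr)
    assume "\<not> base E indep K'"
    then obtain w where w: "w \<in> K - K'" "indep (insert w K')"
      using m_aug[OF m _ _ Suc.prems(1)] x(2) unfolding K'_def by blast
    have "w = y" using w unfolding K'_def by auto
    then have "insert w K' = insert x K" using y unfolding K'_def by auto
    moreover have "insert x K \<subseteq> E" using iK x base_D(2)[OF bB] by auto
    ultimately have "insert x K = K" using base_D(3)[OF Suc.prems(1)] w by blast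
    then show False using xK by auto
  qed
  have e1: "K' - B = (K - B) - {y}" using x unfolding K'_def by auto
  have f1: "finite (K' - B)" using e1 Suc.prems(2) by auto
  have c1: "k = card (K' - B)" using e1 Suc.hyps(2) Suc.prems(2) y by auto
  have IH: "finite (B - K') \<and> card (B - K') = card (K' - B)" using Suc.hyps(1)[OF c1 bK' f1] .
  have e2: "B - K = insert x (B - K')" using x xy y unfolding K'_def by auto
  have "x \<notin> B - K'" unfolding K'_def by auto
  then show ?case using e2 IH c1 Suc.hyps(2) by auto
qed

lemma circ_exists:
  assumes m: "matroid E indep"
  shows "finite X \<Longrightarrow> X \<subseteq> E \<Longrightarrow> \<not> indep X \<Longrightarrow> \<exists>C\<subseteq>X. circuit E indep C"
proof (induction X rule: finite_psubset_induct)
  case (psubset X)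
  show ?case
  proof (cases "\<forall>x\<in>X. indep (X - {x})")
    case True
    then have "circuit E indep X" using psubset unfolding circuit_def by auto
    then show ?thesis by blast
  next
    case False
    then obtain x where x: "x \<in> X" "\<not> indep (X - {x})" by blast
    have "X - {x} \<subset> X" using x by auto
    then obtain C where "C \<subseteq> X - {x}" "circuit E indep C"
      using psubset.IH[of "X - {x}"] psubset.prems x by blast
    then show ?thesis by blast
  qed
qed

lemma fc:
  assumes fm: "finitary_matroid E indep" and bB: "base E indep B" and e: "e \<in> E" "e \<notin> B"
  shows "circuit E indep (fund_circuit E indep e B) \<and> e \<in> fund_circuit E indep e B
    \<and> fund_circuit E indep e B \<subseteq> insert e B \<and> finite (fund_circuit E indep e B)
    \<and> (\<forall>b\<in>B. b \<notin> fund_circuit E indep e B \<longrightarrow> \<not> indep (insert e (B - {b})))"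
proof -
  have m: "matroid E indep" using fm unfolding finitary_matroid_def by auto
  define C where "C = insert e {b\<in>B. indep (insert e (B - {b}))}"
  have XE: "insert e B \<subseteq> E" using base_D(2)[OF bB] e by auto
  have CX: "C \<subseteq> insert e B" unfolding C_def by auto
  have dep: "\<not> indep (insert e B)"
  proof
    assume "indep (insert e B)"
    then have "insert e B = B" using base_D(3)[OF bB] XE by blast
    then show False using e by auto
  qed
  have Cdep: "\<not> indep C"
  proof
    assume iC: "indep C"
    obtain K where K: "C \<subseteq> K" "maximal_indep E indep (insert e B) K"
      using m_max[OF m iC CX XE] by blast
    have bK: "base E indep K" using lemM[OF m bB subset_insertI XE K(2)] .
    have KX: "K \<subseteq> insert e B" "indep K" using K(2) unfolding maximal_indep_def by auto
    have "K \<noteq> insert e B" using dep KX by auto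
    then obtain b where b: "b \<in> insert e B" "b \<notin> K" using KX by blast
    have "e \<in> K" using K(1) unfolding C_def by auto
    then have bB': "b \<in> B" using b by auto
    have "b \<notin> C" using b K(1) by auto
    then have nb: "\<not> indep (insert e (B - {b}))" using bB' unfolding C_def by auto
    have "\<forall>x\<in>K - B. \<not> indep (insert x (B - {b}))" using KX nb by auto
    then show False using lemL[OF m bB bK bB' b(2)] by blast
  qed
  have circ: "circuit E indep C"
    unfolding circuit_def
  proof (intro conjI ballI)
    show "C \<subseteq> E" using CX XE by auto
    show "\<not> indep C" by fact
  next
    fix x assume x: "x \<in> C"
    show "indep (C - {x})"
    proof (cases "x = e")
      case True
      then have "C - {x} \<subseteq> B" unfolding C_def by auto
      then show ?thesis using m_down[OF m base_D(1)[OF bB]] by blast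
    next
      case False
      then have x2: "x \<in> B" "indep (insert e (B - {x}))" using x unfolding C_def by auto
      have "C - {x} \<subseteq> insert e (B - {x})" using CX by auto
      then show ?thesis using m_down[OF m x2(2)] by blast
    qed
  qed
  have uniq: "C' = C" if c': "circuit E indep C' \<and> C' \<subseteq> insert e B" for C'
  proof -
    have eC': "e \<in> C'"
    proof (rule ccontr)
      assume "e \<notin> C'"
      then have "C' \<subseteq> B" using c' by auto
      then have "indep C'" using m_down[OF m base_D(1)[OF bB]] by blast
      then show False using c' unfolding circuit_def by auto
    qed
    have sub: "C \<subseteq> C'"
    proof
      fix b assume b: "b \<in> C"
      show "b \<in> C'"
      proof (cases "b = e")
        case True then show ?thesis using eC' by simp
      next
        case False
        then have b2: "b \<in> B" "indep (insert e (B - {b}))" using b unfolding C_def by auto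
        show ?thesis
        proof (rule ccontr)
          assume "b \<notin> C'"
          then have "C' \<subseteq> insert e (B - {b})" using c' by auto
          then have "indep C'" using m_down[OF m b2(2)] by blast
          then show False using c' unfolding circuit_def by auto
        qed
      qed
    qed
    show ?thesis
    proof (rule ccontr)
      assume "C' \<noteq> C"
      then obtain x where x: "x \<in> C'" "x \<notin> C" using sub by blast
      then have "indep (C' - {x})" using c' unfolding circuit_def by auto
      moreover have "C \<subseteq> C' - {x}" using sub x by auto
      ultimately have "indep C" using m_down[OF m] by blast
      then show False using Cdep by simp
    qed
  qed
  have fcC: "fund_circuit E indep e B = C"
    unfolding fund_circuit_def
    apply (rule the_equality)
    using circ CX apply blast
    using uniq apply blast
    done
  have "finite C" using fm circ unfolding finitary_matroid_def by auto
  moreover have "\<forall>b\<in>B. b \<notin> C \<longrightarrow> \<not> indep (insert e (B - {b}))" unfolding C_def by blast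
  moreover have "e \<in> C" unfolding C_def by blast
  ultimately show ?thesis using fcC circ CX by simp
qed

theorem lemma3p3:
  fixes E :: "'a set" and indep :: "'a set \<Rightarrow> bool" and B F :: "'a set"
    and n :: nat and e :: "nat \<Rightarrow> 'a"
  assumes "finitary_matroid E indep"
    and "base E indep B"
    and "\<forall>i\<le>n. e i \<in> E - B"
    and "inj_on e {..n}"
    and "F \<subseteq> B" and "finite F" and "card F \<le> n"
  shows "\<exists>i\<le>n. \<exists>C. circuit E indep C \<and> e i \<in> C \<and>
           C \<subseteq> (\<Union>j\<in>{i..n}. fund_circuit E indep (e j) B) - F"
proof -
  have m: "matroid E indep" using assms(1) unfolding finitary_matroid_def by auto
  have bB: "base E indep B" by fact
  define C where "C j = fund_circuit E indep (e j) B" for j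
  have Cj: "circuit E indep (C j) \<and> e j \<in> C j \<and> C j \<subseteq> insert (e j) B \<and> finite (C j)
    \<and> (\<forall>b\<in>B. b \<notin> C j \<longrightarrow> \<not> indep (insert (e j) (B - {b})))" if "j \<le> n" for j
    unfolding C_def using fc[OF assms(1) bB] assms(3) that by auto
  define E0 where "E0 = e ` {..n}"
  define Y0 where "Y0 = (\<Union>j\<le>n. C j)"
  define S0 where "S0 = E0 \<union> ((B \<inter> Y0) - F)"
  have finS0: "finite S0" unfolding S0_def E0_def Y0_def using Cj by auto
  have BE: "B \<subseteq> E" using base_D(2)[OF bB] .
  have S0E: "S0 \<subseteq> E" unfolding S0_def E0_def using assms(3) BE by auto
  have E0B: "E0 \<inter> B = {}" unfolding E0_def using assms(3) by auto
  have cE0: "card E0 = Suc n" unfolding E0_def using card_image[OF assms(4)] by simp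
  have dep: "\<not> indep S0"
  proof
    assume iS: "indep S0"
    obtain K where K: "S0 \<subseteq> K" "maximal_indep E indep (S0 \<union> B) K"
      using m_max[OF m iS, of "S0 \<union> B"] S0E BE by auto
    have bK: "base E indep K" using lemM[OF m bB _ _ K(2)] S0E BE by auto
    have KX: "K \<subseteq> S0 \<union> B" using K(2) unfolding maximal_indep_def by auto
    have KB: "K - B = E0"
    proof
      show "K - B \<subseteq> E0" using KX unfolding S0_def by auto
      show "E0 \<subseteq> K - B" using K(1) E0B unfolding S0_def by auto
    qed
    have ex: "finite (B - K) \<and> card (B - K) = Suc n"
      using exch[OF m bB bK] KB cE0 unfolding E0_def by auto
    have sub: "B - K \<subseteq> F"
    proof
      fix b assume b: "b \<in> B - K"
      show "b \<in> F"
      proof (rule ccontr)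
        assume bF: "b \<notin> F"
        have "b \<notin> Y0" using b bF K(1) unfolding S0_def by auto
        then have nC: "\<forall>j\<le>n. b \<notin> C j" unfolding Y0_def by auto
        have "\<forall>x\<in>K - B. \<not> indep (insert x (B - {b}))"
        proof
          fix x assume "x \<in> K - B"
          then obtain j where j: "j \<le> n" "x = e j" using KB unfolding E0_def by auto
          then show "\<not> indep (insert x (B - {b}))" using Cj[OF j(1)] nC b by auto
        qed
        then show False using lemL[OF m bB bK] b by blast
      qed
    qed
    have "card (B - K) \<le> card F" using card_mono[OF assms(6) sub] .
    then show False using ex assms(7) by auto
  qed
  obtain D where D: "D \<subseteq> S0" "circuit E indep D"
    using circ_exists[OF m finS0 S0E dep] by blast
  have "D \<inter> E0 \<noteq> {}"
  proof
    assume "D \<inter> E0 = {}"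
    then have "D \<subseteq> B" using D(1) unfolding S0_def by auto
    then have "indep D" using m_down[OF m base_D(1)[OF bB]] by blast
    then show False using D(2) unfolding circuit_def by auto
  qed
  then obtain j0 where j0: "j0 \<le> n \<and> e j0 \<in> D" unfolding E0_def by auto
  define i where "i = (LEAST j. j \<le> n \<and> e j \<in> D)"
  have i: "i \<le> n \<and> e i \<in> D" unfolding i_def by (rule LeastI[where P="\<lambda>j. j \<le> n \<and> e j \<in> D", OF j0])
  have imin: "i \<le> j" if "j \<le> n" "e j \<in> D" for j
    unfolding i_def using Least_le[of "\<lambda>j. j \<le> n \<and> e j \<in> D" j] that by blast
  have DY: "D \<subseteq> (\<Union>j\<in>{i..n}. C j) - F"
  proof
    fix d assume d: "d \<in> D"
    show "d \<in> (\<Union>j\<in>{i..n}. C j) - F"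
    proof (cases "d \<in> E0")
      case True
      then obtain j where j: "j \<le> n" "d = e j" unfolding E0_def by auto
      have "i \<le> j" using imin j d by auto
      moreover have "d \<in> C j" using Cj[OF j(1)] j by auto
      moreover have "d \<notin> F" using assms(3,5) j by auto
      ultimately show ?thesis using j by auto
    next
      case False
      then have dB: "d \<in> B" "d \<notin> F" using d D(1) unfolding S0_def by auto
      have "d \<in> (\<Union>j\<in>{i..n}. C j)"
      proof (rule ccontr)
        assume nd: "d \<notin> (\<Union>j\<in>{i..n}. C j)"
        have iD: "indep (D - {d})" using D(2) d unfolding circuit_def by auto
        have DE: "D \<subseteq> E" using D(2) unfolding circuit_def by auto
        obtain K where K: "D - {d} \<subseteq> K" "maximal_indep E indep (B \<union> D) K"
          using m_max[OF m iD, of "B \<union> D"] DE BE by auto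
        have bK: "base E indep K" using lemM[OF m bB _ _ K(2)] DE BE by auto
        have KX: "K \<subseteq> B \<union> D" "indep K" using K(2) unfolding maximal_indep_def by auto
        have dK: "d \<notin> K"
        proof
          assume "d \<in> K"
          then have "D \<subseteq> K" using K(1) by auto
          then have "indep D" using m_down[OF m KX(2)] by blast
          then show False using D(2) unfolding circuit_def by auto
        qed
        have "\<forall>x\<in>K - B. \<not> indep (insert x (B - {d}))"
        proof
          fix x assume x: "x \<in> K - B"
          then have "x \<in> D" "x \<notin> B" using KX by auto
          then have "x \<in> E0" using D(1) unfolding S0_def by auto
          then obtain j where j: "j \<le> n" "x = e j" unfolding E0_def by auto
          have "i \<le> j" using imin j \<open>x \<in> D\<close> by auto
          then have "d \<notin> C j" using nd j by auto
          then show "\<not> indep (insert x (B - {d}))" using Cj[OF j(1)] dB j by auto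
        qed
        then show False using lemL[OF m bB bK dB(1) dK] by blast
      qed
      then show ?thesis using dB by auto
    qed
  qed
  show ?thesis using i D(2) DY unfolding C_def by blast
qed

end
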